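(* In the setting of the context, assume (A1) and (A2) hold. Let $\{z^k\}$ be generated by SAPS, let $N>0$ be an integer, let $\widetilde z^N=(\widetilde x^N,\widetilde y^N)$ be the averaged iterate, and set $\Delta_k=G(z^k,\xi_k)-g(z^k)$. Then for any $z=(x,y)\in\mathbb{Z}$, $$\phi(\widetilde x^N,y)-\phi(x,\widetilde y^N)\le\Big(2\sum_{k=1}^N\gamma_k\Big)^{-1}\Big[\|z-z^1\|^2-\|z^{N+1}-z\|^2+\sum_{k=1}^N\big(\gamma_k^2\|v(z^k)+G(z^k,\xi_k)\|^2+2\gamma_k\langle\Delta_k,z-z^k\rangle\big)\Big]$$ holds for any $v(z^k)=(v_x(x^k),v_y(y^k))$ with $v_x(x^k)\in\partial\vartheta(x^k)$ and $v_y(y^k)\in\partial\omega(y^k)$.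
   Context: Setting: $\vartheta:\mathbb{R}^n\to\mathbb{R}\cup\{+\infty\}$, $\omega:\mathbb{R}^m\to\mathbb{R}\cup\{+\infty\}$ proper lower semicontinuous convex; $\xi$ random vector supported on $\Xi\subseteq\mathbb{R}^q$; $F:\mathbb{R}^n\times\mathbb{R}^m\times\Xi\to\mathbb{R}$, $f(x,y)=\mathbb{E}[F(x,y,\xi)]$ finite, continuous, convex in $x$, concave in $y$ on $\mathbb{Z}:=\mathrm{dom}\,\vartheta\times\mathrm{dom}\,\omega$; $\phi(x,y)=\vartheta(x)+f(x,y)-\omega(y)$; $z=(x,y)$; $\mathrm{Prox}_{\gamma h}(u)=\mathrm{argmin}_w\{h(w)+\frac{1}{2\gamma}\|w-u\|^2\}$. (A1) Samples $\xi_1,\xi_2,\dots$ are i.i.d. copies of $\xi$. (A2) An oracle returns, for $(x,y,\xi)\in\mathbb{Z}\times\Xi$, $G_x(x,y,\xi)\in\mathbb{R}^n$, $G_y(x,y,\xi)\in\mathbb{R}^m$ with $g_x(x,y):=\mathbb{E}[G_x(x,y,\xi)]\in\partial_xf(x,y)$ and $g_y(x,y):=\mathbb{E}[G_y(x,y,\xi)]$, $-g_y(x,y)\in\partial_y[-f](x,y)$. Write $G(z,\xi)=(G_x(z,\xi),-G_y(z,\xi))$, $g(z)=(g_x(z),-g_y(z))$. SAPS algorithm: given $z^1=(x^1,y^1)\in\mathbb{R}^n\times\mathbb{R}^m$ and step sizes $\gamma_k>0$, for $k=1,2,\dots$: $x^{k+1}=\mathrm{Prox}_{\gamma_k\vartheta}(x^k-\gamma_kG_x(x^k,y^k,\xi_k))$,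 $y^{k+1}=\mathrm{Prox}_{\gamma_k\omega}(y^k+\gamma_kG_y(x^k,y^k,\xi_k))$. Averaged iterate $\widetilde z^N=\sum_{j=1}^N\lambda_j^Nz^j$, $\lambda_j^N=\gamma_j/\sum_{i=1}^N\gamma_i$. *)

theory Defs
  imports "HOL-Analysis.Analysis" "HOL-Probability.Probability"
begin

text \<open>Extended-real-valued functions h : E \<Rightarrow> R \<union> {+\<infinity>} are modelled as maps into ereal.\<close>

definition edom :: "('a \<Rightarrow> ereal) \<Rightarrow> 'a set" where
  "edom h = {x. h x \<noteq> \<infinity>}"

definition proper_fun :: "('a \<Rightarrow> ereal) \<Rightarrow> bool" where
  "proper_fun h \<longleftrightarrow> (\<forall>x. h x \<noteq> -\<infinity>) \<and> edom h \<noteq> {}"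

definition convex_fun :: "('a::real_vector \<Rightarrow> ereal) \<Rightarrow> bool" where
  "convex_fun h \<longleftrightarrow> (\<forall>x y u v. u \<ge> 0 \<longrightarrow> v \<ge> 0 \<longrightarrow> u + v = 1 \<longrightarrow>
      h (u *\<^sub>R x + v *\<^sub>R y) \<le> ereal u * h x + ereal v * h y)"

definition lsc_fun :: "('a::metric_space \<Rightarrow> ereal) \<Rightarrow> bool" where
  "lsc_fun h \<longleftrightarrow> (\<forall>x X. X \<longlonglongrightarrow> x \<longrightarrow> h x \<le> liminf (\<lambda>n. h (X n)))"

definition subdiff :: "('a::real_inner \<Rightarrow> ereal) \<Rightarrow> 'a \<Rightarrow> 'a set" where
  "subdiff h x = {v. \<bar>h x\<bar> \<noteq> \<infinity> \<and> (\<forall>w. h w \<ge> h x + ereal (inner v (w - x)))}"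

text \<open>Proximal map: the (unique, for proper lsc convex h) minimiser of
  h(w) + 1/(2 gamma) * norm (w - u)^2.\<close>
definition prox :: "('a::real_normed_vector \<Rightarrow> ereal) \<Rightarrow> real \<Rightarrow> 'a \<Rightarrow> 'a" where
  "prox h \<gamma> u = (THE w. \<forall>w'. h w + ereal (norm (w - u)^2 / (2 * \<gamma>))
                              \<le> h w' + ereal (norm (w' - u)^2 / (2 * \<gamma>)))"

end

theory Submission
  imports Defs
begin

lemma small_t:
  fixes X C :: real
  assumes C: "C \<ge> 0" and H: "\<And>t. 0 < t \<Longrightarrow> t \<le> 1 \<Longrightarrow> X \<le> t * C"
  shows "X \<le> 0"
proof (rule ccontr)
  assume "\<not> X \<le> 0"
  hence X: "X > 0" by simp
  define t where "t = min 1 (X / (2*C+1))"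
  have t0: "t > 0" using X C by (simp add: t_def)
  have t1: "t \<le> 1" by (simp add: t_def)
  have "t \<le> X / (2*C+1)" by (simp add: t_def)
  hence l1: "t * C \<le> X / (2*C+1) * C" using C by (rule mult_right_mono)
  have "C*X \<ge> 0" using X C by simp
  hence "X * C < X * (2*C+1)" using X by (simp add: algebra_simps)
  hence "X / (2*C+1) * C < X" using C by (simp add: field_simps)
  with l1 have "t * C < X" by simp
  then show False using H[OF t0 t1] by simp
qed

lemma norm_expand:
  fixes p u w :: "'a::real_inner"
  shows "norm ((1 - t) *\<^sub>R p + t *\<^sub>R w - u)^2 = norm (p - u)^2 + 2*t*inner (p-u) (w-p) + t^2 * norm (w-p)^2"
proof -
  have e: "(1 - t) *\<^sub>R p + t *\<^sub>R w - u = (p - u) + t *\<^sub>R (w - p)" by (simp add: algebra_simps)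
  show ?thesis unfolding e power2_norm_eq_inner
    by (simp add: inner_add inner_diff inner_scaleR inner_commute algebra_simps power2_eq_square)
qed

lemma prox_var:
  fixes h :: "'a::real_inner \<Rightarrow> ereal"
  assumes cvx: "convex_fun h" and g: "\<gamma> > 0"
   and hp: "h p = ereal a"
   and mn: "\<forall>w'. h p + ereal (norm (p-u)^2/(2*\<gamma>)) \<le> h w' + ereal (norm (w'-u)^2/(2*\<gamma>))"
   and hw: "h w = ereal b"
  shows "inner (u - p) (w - p) \<le> \<gamma> * (b - a)"
proof -
  have key: "\<gamma>*a - \<gamma>*b - inner (p - u) (w - p) \<le> t * (norm (w-p)^2/2)" if t: "0 < t" "t \<le> 1" for t
  proof -
    define wt where "wt = (1 - t) *\<^sub>R p + t *\<^sub>R w"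
    have "h wt \<le> ereal (1-t) * h p + ereal t * h w"
      using cvx t unfolding convex_fun_def wt_def by auto
    hence c1: "h wt \<le> ereal ((1-t)*a + t*b)" by (simp add: hp hw)
    have "ereal a + ereal (norm (p-u)^2/(2*\<gamma>)) \<le> h wt + ereal (norm (wt-u)^2/(2*\<gamma>))"
      using mn hp by metis
    also have "\<dots> \<le> ereal ((1-t)*a + t*b) + ereal (norm (wt-u)^2/(2*\<gamma>))"
      using c1 by (rule add_right_mono)
    finally have "a + norm (p-u)^2/(2*\<gamma>) \<le> (1-t)*a + t*b + norm (wt-u)^2/(2*\<gamma>)" by simp
    hence "a + norm (p-u)^2/(2*\<gamma>) \<le> (1-t)*a + t*b + (norm (p - u)^2 + 2*t*inner (p-u) (w-p) + t^2 * norm (w-p)^2)/(2*\<gamma>)"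
      unfolding wt_def norm_expand .
    hence "2*\<gamma>*(a + norm (p-u)^2/(2*\<gamma>)) \<le> 2*\<gamma>*((1-t)*a + t*b + (norm (p - u)^2 + 2*t*inner (p-u) (w-p) + t^2 * norm (w-p)^2)/(2*\<gamma>))"
      using g by (intro mult_left_mono) auto
    note h2 = this
    have "2*\<gamma>*a + norm (p-u)^2 \<le> 2*\<gamma>*((1-t)*a + t*b) + (norm (p - u)^2 + 2*t*inner (p-u) (w-p) + t^2 * norm (w-p)^2)"
    proof -
      have d: "\<And>M. 2*\<gamma>*(M/(2*\<gamma>)) = M" using g by simp
      show ?thesis using h2 by (simp only: distrib_left d)
    qed
    hence "t * (2*\<gamma>*a) \<le> t * (2*\<gamma>*b + 2*inner (p-u) (w-p) + t * norm (w-p)^2)"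
      by (simp add: algebra_simps power2_eq_square)
    hence "2*\<gamma>*a \<le> 2*\<gamma>*b + 2*inner (p-u) (w-p) + t * norm (w-p)^2"
      using t by simp
    thus ?thesis by simp
  qed
  have "\<gamma>*a - \<gamma>*b - inner (p - u) (w - p) \<le> 0"
    by (rule small_t[OF _ key]) auto
  moreover have "inner (u - p) (w - p) = - inner (p - u) (w - p)" by (simp add: inner_diff_left)
  ultimately show ?thesis by (simp add: algebra_simps)
qed

lemma prox_exists:
  fixes h :: "'a::euclidean_space \<Rightarrow> ereal"
  assumes nm: "\<forall>x. h x \<noteq> -\<infinity>" and lsc: "lsc_fun h" and g: "\<gamma> > 0"
    and v0: "v0 \<in> subdiff h x0"
  shows "\<exists>p. \<forall>w'. h p + ereal (norm (p-u)^2/(2*\<gamma>)) \<le> h w' + ereal (norm (w'-u)^2/(2*\<gamma>))"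
proof -
  define q where "q w = norm (w-u)^2/(2*\<gamma>)" for w
  define hr where "hr w = real_of_ereal (h w)" for w
  obtain c0 where hx0: "h x0 = ereal c0" using v0 unfolding subdiff_def by (cases "h x0") auto
  have hfin: "h w = ereal (hr w)" if "w \<in> edom h" for w
    using that nm[rule_format, of w] unfolding edom_def hr_def by (cases "h w") auto
  have sg: "hr w \<ge> c0 + inner v0 (w - x0)" if "w \<in> edom h" for w
  proof -
    have "h w \<ge> h x0 + ereal (inner v0 (w - x0))" using v0 unfolding subdiff_def by auto
    thus ?thesis using hfin[OF that] hx0 by simp
  qed
  define a where "a = norm v0"
  define K0 where "K0 = c0 - a*norm(u-x0) - \<gamma>*a^2/2"
  have lbq: "hr w + q w \<ge> K0 + (norm (w-u) - \<gamma>*a)^2/(2*\<gamma>)" if "w \<in> edom h" for w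
  proof -
    have "inner v0 (w - x0) \<ge> - (a * norm (w - x0))"
      unfolding a_def using Cauchy_Schwarz_ineq2[of v0 "w-x0"] by linarith
    moreover have "norm (w - x0) \<le> norm (w-u) + norm (u-x0)"
      using norm_triangle_ineq[of "w-u" "u-x0"] by simp
    moreover have "a \<ge> 0" by (simp add: a_def)
    ultimately have "inner v0 (w - x0) \<ge> - (a * (norm (w-u) + norm (u-x0)))"
      by (smt (verit) mult_left_mono)
    hence "hr w \<ge> c0 - a * norm (w-u) - a * norm (u-x0)" using sg[OF that] by (simp add: algebra_simps)
    moreover have "K0 + (norm (w-u) - \<gamma>*a)^2/(2*\<gamma>) = c0 - a*norm(u-x0) - a * norm (w-u) + q w"
      using g by (simp add: K0_def q_def field_simps power2_eq_square)
    ultimately show ?thesis by linarith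
  qed
  define T where "T = (\<lambda>w. hr w + q w) ` edom h"
  define m where "m = Inf T"
  have x0e: "x0 \<in> edom h" using hx0 by (simp add: edom_def)
  have Tne: "T \<noteq> {}" using x0e by (auto simp: T_def)
  have bdd: "bdd_below T"
  proof
    fix t assume "t \<in> T"
    then obtain w where "w \<in> edom h" "t = hr w + q w" by (auto simp: T_def)
    moreover have "(norm (w-u) - \<gamma>*a)^2/(2*\<gamma>) \<ge> 0" using g by simp
    ultimately show "K0 \<le> t" using lbq by fastforce
  qed
  have mle: "m \<le> hr w + q w" if "w \<in> edom h" for w
    unfolding m_def by (rule cInf_lower) (use that bdd in \<open>auto simp: T_def\<close>)
  have "\<forall>n. \<exists>w\<in>edom h. hr w + q w < m + inverse (real (Suc n))"
  proof
    fix n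
    have "Inf T < m + inverse (real (Suc n))" by (simp add: m_def)
    from cInf_lessD[OF Tne this] show "\<exists>w\<in>edom h. hr w + q w < m + inverse (real (Suc n))"
      by (auto simp: T_def)
  qed
  then obtain ws where ws: "\<And>n. ws n \<in> edom h" "\<And>n. hr (ws n) + q (ws n) < m + inverse (real (Suc n))"
    by metis
  define R0 where "R0 = sqrt (2*\<gamma>*(m + 1 - K0))"
  have bnd: "norm (ws n - u) \<le> \<gamma>*a + R0" for n
  proof -
    have "inverse (real (Suc n)) \<le> 1" by (simp add: inverse_le_1_iff)
    hence "K0 + (norm (ws n-u) - \<gamma>*a)^2/(2*\<gamma>) \<le> m + 1" using lbq[OF ws(1)[of n]] ws(2)[of n] by linarith
    hence "(norm (ws n-u) - \<gamma>*a)^2/(2*\<gamma>) \<le> m + 1 - K0" by linarith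
    hence "(norm (ws n-u) - \<gamma>*a)^2 \<le> 2*\<gamma>*(m + 1 - K0)" using g by (simp add: field_simps)
    hence "norm (ws n-u) - \<gamma>*a \<le> R0" unfolding R0_def by (rule real_le_rsqrt)
    thus ?thesis by simp
  qed
  have "bounded (range ws)"
  proof (rule bounded_subset[OF bounded_cball[of u "\<gamma>*a + R0"]])
    show "range ws \<subseteq> cball u (\<gamma> * a + R0)" using bnd by (auto simp: dist_norm norm_minus_commute)
  qed
  then obtain l r where r: "strict_mono r" and lim: "(ws \<circ> r) \<longlonglongrightarrow> l"
    using bounded_imp_convergent_subsequence by blast
  have vlim: "(\<lambda>n. hr (ws n) + q (ws n)) \<longlonglongrightarrow> m"
  proof (rule tendsto_sandwich[of "\<lambda>n. m" _ _ "\<lambda>n. m + inverse (real (Suc n))"])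
    show "\<forall>\<^sub>F n in sequentially. m \<le> hr (ws n) + q (ws n)" using mle ws(1) by auto
    show "\<forall>\<^sub>F n in sequentially. hr (ws n) + q (ws n) \<le> m + inverse (real (Suc n))"
      by (rule always_eventually) (use ws(2) less_imp_le in blast)
    show "(\<lambda>n. m) \<longlonglongrightarrow> m" by simp
    show "(\<lambda>n. m + inverse (real (Suc n))) \<longlonglongrightarrow> m"
      using tendsto_add[OF tendsto_const LIMSEQ_inverse_real_of_nat, of m] by simp
  qed
  have v2: "(\<lambda>n. hr (ws (r n)) + q (ws (r n))) \<longlonglongrightarrow> m"
    using LIMSEQ_subseq_LIMSEQ[OF vlim r] by (simp add: o_def)
  have q2: "(\<lambda>n. q (ws (r n))) \<longlonglongrightarrow> q l"
    unfolding q_def using lim g unfolding o_def by (intro tendsto_intros) auto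
  have h2: "(\<lambda>n. hr (ws (r n))) \<longlonglongrightarrow> m - q l"
    using tendsto_diff[OF v2 q2] by simp
  have h3: "(\<lambda>n. h ((ws \<circ> r) n)) \<longlonglongrightarrow> ereal (m - q l)"
    using tendsto_ereal[OF h2] hfin[OF ws(1)] by (simp add: o_def)
  have "h l \<le> liminf (\<lambda>n. h ((ws \<circ> r) n))" using lsc lim unfolding lsc_fun_def by blast
  also have "liminf (\<lambda>n. h ((ws \<circ> r) n)) = ereal (m - q l)"
    by (rule lim_imp_Liminf[OF _ h3]) simp
  finally have hl: "h l \<le> ereal (m - q l)" .
  hence le: "l \<in> edom h" by (auto simp: edom_def)
  have hl2: "hr l + q l \<le> m" using hl hfin[OF le] by simp
  show ?thesis
  proof (intro exI allI)
    fix w'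
    show "h l + ereal (norm (l-u)^2/(2*\<gamma>)) \<le> h w' + ereal (norm (w'-u)^2/(2*\<gamma>))"
    proof (cases "w' \<in> edom h")
      case True
      with mle[OF True] hl2 hfin[OF True] hfin[OF le] show ?thesis by (simp add: q_def)
    next
      case False
      hence "h w' = \<infinity>" by (simp add: edom_def)
      thus ?thesis by simp
    qed
  qed
qed

lemma prox_min:
  fixes h :: "'a::euclidean_space \<Rightarrow> ereal"
  assumes nm: "\<forall>x. h x \<noteq> -\<infinity>" and lsc: "lsc_fun h" and cvx: "convex_fun h" and g: "\<gamma> > 0"
    and v0: "v0 \<in> subdiff h x0"
  shows "\<forall>w'. h (prox h \<gamma> u) + ereal (norm (prox h \<gamma> u - u)^2/(2*\<gamma>)) \<le> h w' + ereal (norm (w'-u)^2/(2*\<gamma>))"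
    and "h (prox h \<gamma> u) \<noteq> \<infinity>"
proof -
  define MP where "MP p = (\<forall>w'. h p + ereal (norm (p-u)^2/(2*\<gamma>)) \<le> h w' + ereal (norm (w'-u)^2/(2*\<gamma>)))" for p
  obtain p where p: "MP p" using prox_exists[OF nm lsc g v0, of u] unfolding MP_def by blast
  obtain c0 where hx0: "h x0 = ereal c0" using v0 unfolding subdiff_def by (cases "h x0") auto
  have fin: "\<exists>a. h p' = ereal a" if "MP p'" for p'
  proof -
    have "h p' + ereal (norm (p'-u)^2/(2*\<gamma>)) \<le> h x0 + ereal (norm (x0-u)^2/(2*\<gamma>))"
      using that unfolding MP_def by blast
    hence "h p' \<noteq> \<infinity>" using hx0 by auto
    thus ?thesis using nm[rule_format, of p'] by (cases "h p'") auto
  qed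
  have uniq: "p' = p" if mp2: "MP p'" for p'
  proof -
    obtain a where a: "h p = ereal a" using fin[OF p] by blast
    obtain b where b: "h p' = ereal b" using fin[OF mp2] by blast
    have 1: "inner (u - p) (p' - p) \<le> \<gamma> * (b - a)"
      by (rule prox_var[OF cvx g a _ b]) (use p in \<open>simp add: MP_def\<close>)
    have 2: "inner (u - p') (p - p') \<le> \<gamma> * (a - b)"
      by (rule prox_var[OF cvx g b _ a]) (use mp2 in \<open>simp add: MP_def\<close>)
    have "inner (u - p) (p' - p) + inner (u - p') (p - p') = inner (p' - p) (p' - p)"
      by (simp add: inner_diff inner_commute algebra_simps)
    hence "inner (p' - p) (p' - p) \<le> 0" using 1 2 by (simp add: algebra_simps)
    hence "inner (p' - p) (p' - p) = 0" using inner_ge_zero[of "p' - p"] by linarith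
    thus ?thesis by simp
  qed
  have "(THE w. MP w) = p" using p uniq by (rule the_equality[where P=MP])
  moreover have "prox h \<gamma> u = (THE w. MP w)" unfolding prox_def MP_def ..
  ultimately have "prox h \<gamma> u = p" by simp
  moreover obtain a where "h p = ereal a" using fin[OF p] by blast
  ultimately show "\<forall>w'. h (prox h \<gamma> u) + ereal (norm (prox h \<gamma> u - u)^2/(2*\<gamma>)) \<le> h w' + ereal (norm (w'-u)^2/(2*\<gamma>))"
    and "h (prox h \<gamma> u) \<noteq> \<infinity>" using p unfolding MP_def by simp_all
qed

lemma step_alg:
  fixes d e G v :: "'a::real_inner"
  assumes 1: "inner (d + \<gamma> *\<^sub>R G) (d + e) \<le> \<gamma> * b - \<gamma> * ap"
    and 2: "\<gamma> * ap \<ge> \<gamma> * ak + \<gamma> * inner v d"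
  shows "norm (d + e)^2 \<le> norm e^2 + 2*\<gamma>*(b - ak) - 2*\<gamma>*inner G e + \<gamma>^2 * norm (v + G)^2"
proof -
  have 3: "0 \<le> inner (d + \<gamma> *\<^sub>R (v+G)) (d + \<gamma> *\<^sub>R (v+G))" by simp
  have E1: "inner (d + \<gamma> *\<^sub>R G) (d + e) = inner d d + inner d e + \<gamma> * inner G d + \<gamma> * inner G e"
    by (simp add: inner_add_left inner_add_right inner_commute distrib_left)
  have E2: "norm (d + e)^2 = inner d d + 2 * inner d e + inner e e"
    by (simp add: power2_norm_eq_inner inner_add_left inner_add_right inner_commute)
  have E3: "norm (v + G)^2 = inner v v + 2 * inner v G + inner G G"
    by (simp add: power2_norm_eq_inner inner_add_left inner_add_right inner_commute)
  have E4: "inner (d + \<gamma> *\<^sub>R (v+G)) (d + \<gamma> *\<^sub>R (v+G)) = inner d d + 2*(\<gamma> * inner v d) + 2*(\<gamma> * inner G d)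
      + (\<gamma>*\<gamma>) * inner v v + 2*((\<gamma>*\<gamma>) * inner v G) + (\<gamma>*\<gamma>) * inner G G"
    by (simp add: inner_add_left inner_add_right inner_commute algebra_simps)
  have E5: "norm e ^ 2 = inner e e" by (simp add: power2_norm_eq_inner)
  have E6: "\<gamma>^2 * norm (v + G)^2 = (\<gamma>*\<gamma>) * inner v v + 2*((\<gamma>*\<gamma>) * inner v G) + (\<gamma>*\<gamma>) * inner G G"
    unfolding E3 by (simp add: algebra_simps power2_eq_square)
  have E7: "2*\<gamma>*(b - ak) - 2*\<gamma>*inner G e = 2*(\<gamma>*b) - 2*(\<gamma>*ak) - 2*(\<gamma>*inner G e)"
    by (simp add: algebra_simps)
  show ?thesis unfolding E2 E5 using 1 2 3 E1 E4 E6 E7 by linarith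
qed

lemma prox_step:
  fixes h :: "'a::euclidean_space \<Rightarrow> ereal"
  assumes nm: "\<forall>x. h x \<noteq> -\<infinity>" and lsc: "lsc_fun h" and cvx: "convex_fun h" and g: "\<gamma> > 0"
    and v: "v \<in> subdiff h xk" and p: "p = prox h \<gamma> (xk - \<gamma> *\<^sub>R G)" and hw: "h w = ereal b"
  shows "norm (p - w)^2 \<le> norm (xk - w)^2 + 2*\<gamma>*(b - real_of_ereal (h xk)) + 2*\<gamma>*inner G (w - xk) + \<gamma>^2 * norm (v + G)^2"
proof -
  note pm = prox_min[OF nm lsc cvx g v, of "xk - \<gamma> *\<^sub>R G", folded p]
  obtain ap where ap: "h p = ereal ap" using pm(2) nm[rule_format, of p] by (cases "h p") auto
  obtain ak where ak: "h xk = ereal ak" using v unfolding subdiff_def by (cases "h xk") auto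
  have 1: "inner ((xk - \<gamma> *\<^sub>R G) - p) (w - p) \<le> \<gamma> * (b - ap)"
    by (rule prox_var[OF cvx g ap pm(1) hw])
  have "h p \<ge> h xk + ereal (inner v (p - xk))" using v unfolding subdiff_def by auto
  hence "ap \<ge> ak + inner v (p - xk)" using ap ak by simp
  hence "\<gamma> * (ak + inner v (p - xk)) \<le> \<gamma> * ap" using g by (intro mult_left_mono) auto
  hence 2: "\<gamma> * ap \<ge> \<gamma> * ak + \<gamma> * inner v (p - xk)" by (simp only: distrib_left)
  have e1: "inner ((xk - \<gamma> *\<^sub>R G) - p) (w - p) = inner ((p - xk) + \<gamma> *\<^sub>R G) ((p - xk) + (xk - w))"
  proof -
    have a1: "(xk - \<gamma> *\<^sub>R G) - p = - ((p - xk) + \<gamma> *\<^sub>R G)" by (simp add: algebra_simps)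
    have a2: "w - p = - ((p - xk) + (xk - w))" by (simp add: algebra_simps)
    show ?thesis unfolding a1 a2 by (simp only: inner_minus_left inner_minus_right minus_minus)
  qed
  have "norm ((p - xk) + (xk - w))^2 \<le> norm (xk - w)^2 + 2*\<gamma>*(b - ak) - 2*\<gamma>*inner G (xk - w) + \<gamma>^2 * norm (v + G)^2"
    by (rule step_alg) (use 1 2 e1 in \<open>simp_all only: right_diff_distrib\<close>)
  moreover have "inner G (xk - w) = - inner G (w - xk)" by (simp add: inner_diff)
  ultimately show ?thesis using ak by simp
qed

theorem proposition2p1:
  fixes \<theta> :: "'a::euclidean_space \<Rightarrow> ereal"
    and \<omega> :: "'b::euclidean_space \<Rightarrow> ereal"
    and P :: "'c measure"  \<comment> \<open>distribution of the random vector xi\<close>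
    and \<Xi> :: "'c set"
    and M :: "'w measure"  \<comment> \<open>underlying probability space of the samples\<close>
    and \<xi> :: "nat \<Rightarrow> 'w \<Rightarrow> 'c"  \<comment> \<open>samples xi_1, xi_2, ...\<close>
    and F :: "'a \<Rightarrow> 'b \<Rightarrow> 'c \<Rightarrow> real"
    and f :: "'a \<Rightarrow> 'b \<Rightarrow> real"
    and Gx :: "'a \<Rightarrow> 'b \<Rightarrow> 'c \<Rightarrow> 'a" and Gy :: "'a \<Rightarrow> 'b \<Rightarrow> 'c \<Rightarrow> 'b"
    and gx :: "'a \<Rightarrow> 'b \<Rightarrow> 'a" and gy :: "'a \<Rightarrow> 'b \<Rightarrow> 'b"
    and \<gamma> :: "nat \<Rightarrow> real"
    and x1 :: 'a and y1 :: 'b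
    and xs :: "'w \<Rightarrow> nat \<Rightarrow> 'a" and ys :: "'w \<Rightarrow> nat \<Rightarrow> 'b"
    and N :: nat and s :: 'w
    and vx :: "nat \<Rightarrow> 'a" and vy :: "nat \<Rightarrow> 'b"
    and x :: 'a and y :: 'b
  assumes \<theta>: "proper_fun \<theta>" "lsc_fun \<theta>" "convex_fun \<theta>"
    and \<omega>: "proper_fun \<omega>" "lsc_fun \<omega>" "convex_fun \<omega>"
    and P: "prob_space P" and supp: "AE t in P. t \<in> \<Xi>"
    and f_def: "\<forall>a\<in>edom \<theta>. \<forall>b\<in>edom \<omega>. integrable P (F a b) \<and> f a b = (\<integral>t. F a b t \<partial>P)"
    and f_cont: "continuous_on (edom \<theta> \<times> edom \<omega>) (\<lambda>(a, b). f a b)"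
    and f_cvx: "\<forall>b\<in>edom \<omega>. convex_on (edom \<theta>) (\<lambda>a. f a b)"
    and f_ccv: "\<forall>a\<in>edom \<theta>. concave_on (edom \<omega>) (\<lambda>b. f a b)"
    \<comment> \<open>(A1): i.i.d. samples with the distribution of xi\<close>
    and A1: "prob_space M" "\<forall>k. \<xi> k \<in> measurable M P" "\<forall>k. distr M P (\<xi> k) = P"
            "prob_space.indep_vars M (\<lambda>_. P) \<xi> UNIV"
    \<comment> \<open>(A2): stochastic oracle\<close>
    and A2x: "\<forall>a\<in>edom \<theta>. \<forall>b\<in>edom \<omega>. integrable P (Gx a b) \<and> gx a b = (\<integral>t. Gx a b t \<partial>P)
              \<and> gx a b \<in> subdiff (\<lambda>a'. if a' \<in> edom \<theta> then ereal (f a' b) else \<infinity>) a"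
    and A2y: "\<forall>a\<in>edom \<theta>. \<forall>b\<in>edom \<omega>. integrable P (Gy a b) \<and> gy a b = (\<integral>t. Gy a b t \<partial>P)
              \<and> - gy a b \<in> subdiff (\<lambda>b'. if b' \<in> edom \<omega> then ereal (- f a b') else \<infinity>) b"
    \<comment> \<open>SAPS\<close>
    and step: "\<forall>k. \<gamma> k > 0"
    and init: "\<forall>w. xs w 1 = x1 \<and> ys w 1 = y1"
    and iter: "\<forall>w. \<forall>k\<ge>1.
        xs w (Suc k) = prox \<theta> (\<gamma> k) (xs w k - \<gamma> k *\<^sub>R Gx (xs w k) (ys w k) (\<xi> k w)) \<and>
        ys w (Suc k) = prox \<omega> (\<gamma> k) (ys w k + \<gamma> k *\<^sub>R Gy (xs w k) (ys w k) (\<xi> k w))"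
    and N: "N > 0" and s: "s \<in> space M"
    and v: "\<forall>k\<in>{1..N}. vx k \<in> subdiff \<theta> (xs s k) \<and> vy k \<in> subdiff \<omega> (ys s k)"
    and z: "x \<in> edom \<theta>" "y \<in> edom \<omega>"
  shows
    "let \<phi> = (\<lambda>a b. \<theta> a + ereal (f a b) - \<omega> b);
         S = (\<Sum>k=1..N. \<gamma> k);
         xt = (\<Sum>j=1..N. (\<gamma> j / S) *\<^sub>R xs s j);
         yt = (\<Sum>j=1..N. (\<gamma> j / S) *\<^sub>R ys s j);
         zk = (\<lambda>k. (xs s k, ys s k));
         G = (\<lambda>k. (Gx (xs s k) (ys s k) (\<xi> k s), - Gy (xs s k) (ys s k) (\<xi> k s)));
         g = (\<lambda>k. (gx (xs s k) (ys s k), - gy (xs s k) (ys s k)));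
         \<Delta> = (\<lambda>k. G k - g k);
         vv = (\<lambda>k. (vx k, vy k))
     in \<phi> xt y - \<phi> x yt
        \<le> ereal ((1 / (2 * S)) *
             (norm ((x, y) - zk 1)^2 - norm (zk (N + 1) - (x, y))^2
              + (\<Sum>k=1..N. \<gamma> k ^ 2 * norm (vv k + G k)^2
                           + 2 * \<gamma> k * inner (\<Delta> k) ((x, y) - zk k))))"
proof -
  define X where "X k = xs s k" for k
  define Y where "Y k = ys s k" for k
  define GX where "GX k = Gx (X k) (Y k) (\<xi> k s)" for k
  define GY where "GY k = Gy (X k) (Y k) (\<xi> k s)" for k
  define gxk where "gxk k = gx (X k) (Y k)" for k
  define gyk where "gyk k = gy (X k) (Y k)" for k
  define thr where "thr a = real_of_ereal (\<theta> a)" for a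
  define omr where "omr b = real_of_ereal (\<omega> b)" for b
  define S where "S = (\<Sum>k=1..N. \<gamma> k)"
  define Dn where "Dn k = norm (X k - x)^2 + norm (Y k - y)^2" for k
  define R where "R k = \<gamma> k^2 * (norm (vx k + GX k)^2 + norm (vy k + - GY k)^2)
     + 2 * \<gamma> k * (inner (GX k - gxk k) (x - X k) + inner (- GY k + gyk k) (y - Y k))" for k
  define gap where "gap k = (thr (X k) + f (X k) y) + (omr (Y k) + - f x (Y k)) - (omr y + thr x)" for k
  have nm1: "\<forall>a. \<theta> a \<noteq> -\<infinity>" using \<theta>(1) by (simp add: proper_fun_def)
  have nm2: "\<forall>a. \<omega> a \<noteq> -\<infinity>" using \<omega>(1) by (simp add: proper_fun_def)
  have fin1: "\<theta> a = ereal (thr a)" if "a \<in> edom \<theta>" for a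
    using that nm1[rule_format, of a] unfolding edom_def thr_def by (cases "\<theta> a") auto
  have fin2: "\<omega> a = ereal (omr a)" if "a \<in> edom \<omega>" for a
    using that nm2[rule_format, of a] unfolding edom_def omr_def by (cases "\<omega> a") auto
  have vX: "vx k \<in> subdiff \<theta> (X k)" and vY: "vy k \<in> subdiff \<omega> (Y k)" if "k \<in> {1..N}" for k
    using v that by (auto simp: X_def Y_def)
  have XD: "X k \<in> edom \<theta>" if "k \<in> {1..N}" for k
    using vX[OF that] by (auto simp: subdiff_def edom_def)
  have YE: "Y k \<in> edom \<omega>" if "k \<in> {1..N}" for k
    using vY[OF that] by (auto simp: subdiff_def edom_def)
  have gpos: "\<gamma> k > 0" for k using step by simp
  have perk: "2 * \<gamma> k * gap k \<le> Dn k - Dn (Suc k) + R k" if k: "k \<in> {1..N}" for k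
  proof -
    have it: "X (Suc k) = prox \<theta> (\<gamma> k) (X k - \<gamma> k *\<^sub>R GX k)"
        "Y (Suc k) = prox \<omega> (\<gamma> k) (Y k - \<gamma> k *\<^sub>R (- GY k))"
      using iter k by (auto simp: X_def Y_def GX_def GY_def)
    have Px: "norm (X (Suc k) - x)^2 \<le> norm (X k - x)^2 + 2*\<gamma> k*(thr x - real_of_ereal (\<theta> (X k)))
        + 2*\<gamma> k*inner (GX k) (x - X k) + (\<gamma> k)^2 * norm (vx k + GX k)^2"
      by (rule prox_step[OF nm1 \<theta>(2) \<theta>(3) gpos vX[OF k] it(1) fin1[OF z(1)]])
    have Py: "norm (Y (Suc k) - y)^2 \<le> norm (Y k - y)^2 + 2*\<gamma> k*(omr y - real_of_ereal (\<omega> (Y k)))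
        + 2*\<gamma> k*inner (- GY k) (y - Y k) + (\<gamma> k)^2 * norm (vy k + - GY k)^2"
      by (rule prox_step[OF nm2 \<omega>(2) \<omega>(3) gpos vY[OF k] it(2) fin2[OF z(2)]])
    have "gxk k \<in> subdiff (\<lambda>a'. if a' \<in> edom \<theta> then ereal (f a' (Y k)) else \<infinity>) (X k)"
      unfolding gxk_def using A2x XD[OF k] YE[OF k] by blast
    hence "(if x \<in> edom \<theta> then ereal (f x (Y k)) else \<infinity>) \<ge>
        (if X k \<in> edom \<theta> then ereal (f (X k) (Y k)) else \<infinity>) + ereal (inner (gxk k) (x - X k))"
      unfolding subdiff_def by blast
    hence Fx: "f (X k) (Y k) + inner (gxk k) (x - X k) \<le> f x (Y k)" using z(1) XD[OF k] by simp
    have "- gyk k \<in> subdiff (\<lambda>b'. if b' \<in> edom \<omega> then ereal (- f (X k) b') else \<infinity>) (Y k)"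
      unfolding gyk_def using A2y XD[OF k] YE[OF k] by blast
    hence "(if y \<in> edom \<omega> then ereal (- f (X k) y) else \<infinity>) \<ge>
        (if Y k \<in> edom \<omega> then ereal (- f (X k) (Y k)) else \<infinity>) + ereal (inner (- gyk k) (y - Y k))"
      unfolding subdiff_def by blast
    hence Fy: "- f (X k) (Y k) + inner (- gyk k) (y - Y k) \<le> - f (X k) y" using z(2) YE[OF k] by simp
    have t1: "real_of_ereal (\<theta> (X k)) = thr (X k)" by (simp add: thr_def)
    have t2: "real_of_ereal (\<omega> (Y k)) = omr (Y k)" by (simp add: omr_def)
    have Fx2: "\<gamma> k * (f (X k) (Y k) + inner (gxk k) (x - X k)) \<le> \<gamma> k * f x (Y k)"
      using Fx gpos[of k] by (intro mult_left_mono) auto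
    have Fy2: "\<gamma> k * (- f (X k) (Y k) + inner (- gyk k) (y - Y k)) \<le> \<gamma> k * (- f (X k) y)"
      using Fy gpos[of k] by (intro mult_left_mono) auto
    have i1: "inner (GX k - gxk k) (x - X k) = inner (GX k) (x - X k) - inner (gxk k) (x - X k)"
      by (simp add: inner_diff_left)
    have i2: "inner (- GY k + gyk k) (y - Y k) = inner (- GY k) (y - Y k) - inner (- gyk k) (y - Y k)"
      by (simp add: inner_add_left inner_diff_left)
    show ?thesis
      using Px Py Fx2 Fy2 unfolding t1 t2 gap_def Dn_def R_def i1 i2
      by (simp add: algebra_simps)
  qed
  have tel: "n \<le> N \<Longrightarrow> (\<Sum>k=1..n. 2 * \<gamma> k * gap k) \<le> Dn 1 - Dn (Suc n) + (\<Sum>k=1..n. R k)" for n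
  proof (induction n)
    case 0 thus ?case by simp
  next
    case (Suc n)
    hence "(\<Sum>k=1..n. 2 * \<gamma> k * gap k) \<le> Dn 1 - Dn (Suc n) + (\<Sum>k=1..n. R k)" by simp
    moreover have "2 * \<gamma> (Suc n) * gap (Suc n) \<le> Dn (Suc n) - Dn (Suc (Suc n)) + R (Suc n)"
      using Suc.prems by (intro perk) simp
    ultimately show ?case by simp
  qed
  note telN = tel[OF order_refl]
  have Spos: "S > 0" unfolding S_def using N gpos by (intro sum_pos) auto
  define lam where "lam j = \<gamma> j / S" for j
  have lam1: "(\<Sum>j=1..N. lam j) = 1" unfolding lam_def using Spos
    by (simp add: sum_divide_distrib[symmetric] S_def)
  have lam0: "lam j \<ge> 0" for j using gpos[of j] Spos by (simp add: lam_def)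
  have cvD: "convex (edom \<theta>)"
    unfolding convex_def
  proof (intro ballI allI impI)
    fix a b :: 'a and u v :: real
    assume a: "a \<in> edom \<theta>" and b: "b \<in> edom \<theta>" and uv: "0 \<le> u" "0 \<le> v" "u+v=1"
    have "\<theta> (u *\<^sub>R a + v *\<^sub>R b) \<le> ereal u * \<theta> a + ereal v * \<theta> b"
      using \<theta>(3) uv unfolding convex_fun_def by blast
    thus "u *\<^sub>R a + v *\<^sub>R b \<in> edom \<theta>" using fin1[OF a] fin1[OF b] by (auto simp: edom_def)
  qed
  have cvE: "convex (edom \<omega>)"
    unfolding convex_def
  proof (intro ballI allI impI)
    fix a b :: 'b and u v :: real
    assume a: "a \<in> edom \<omega>" and b: "b \<in> edom \<omega>" and uv: "0 \<le> u" "0 \<le> v" "u+v=1"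
    have "\<omega> (u *\<^sub>R a + v *\<^sub>R b) \<le> ereal u * \<omega> a + ereal v * \<omega> b"
      using \<omega>(3) uv unfolding convex_fun_def by blast
    thus "u *\<^sub>R a + v *\<^sub>R b \<in> edom \<omega>" using fin2[OF a] fin2[OF b] by (auto simp: edom_def)
  qed
  have cvthr: "convex_on (edom \<theta>) thr"
    unfolding convex_on_def
  proof (intro conjI cvD ballI allI impI)
    fix a b :: 'a and u v :: real
    assume a: "a \<in> edom \<theta>" and b: "b \<in> edom \<theta>" and uv: "0 \<le> u" "0 \<le> v" "u+v=1"
    have "\<theta> (u *\<^sub>R a + v *\<^sub>R b) \<le> ereal u * \<theta> a + ereal v * \<theta> b"
      using \<theta>(3) uv unfolding convex_fun_def by blast
    moreover have "u *\<^sub>R a + v *\<^sub>R b \<in> edom \<theta>" using cvD a b uv unfolding convex_def by blast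
    ultimately show "thr (u *\<^sub>R a + v *\<^sub>R b) \<le> u * thr a + v * thr b"
      using fin1[OF a] fin1[OF b] fin1[of "u *\<^sub>R a + v *\<^sub>R b"] by simp
  qed
  have cvomr: "convex_on (edom \<omega>) omr"
    unfolding convex_on_def
  proof (intro conjI cvE ballI allI impI)
    fix a b :: 'b and u v :: real
    assume a: "a \<in> edom \<omega>" and b: "b \<in> edom \<omega>" and uv: "0 \<le> u" "0 \<le> v" "u+v=1"
    have "\<omega> (u *\<^sub>R a + v *\<^sub>R b) \<le> ereal u * \<omega> a + ereal v * \<omega> b"
      using \<omega>(3) uv unfolding convex_fun_def by blast
    moreover have "u *\<^sub>R a + v *\<^sub>R b \<in> edom \<omega>" using cvE a b uv unfolding convex_def by blast
    ultimately show "omr (u *\<^sub>R a + v *\<^sub>R b) \<le> u * omr a + v * omr b"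
      using fin2[OF a] fin2[OF b] fin2[of "u *\<^sub>R a + v *\<^sub>R b"] by simp
  qed
  have cv1: "convex_on (edom \<theta>) (\<lambda>a. thr a + f a y)"
    using cvthr f_cvx z(2) by (intro convex_on_add) auto
  have cv2: "convex_on (edom \<omega>) (\<lambda>b. omr b + - f x b)"
    using cvomr f_ccv z(1) by (intro convex_on_add) (auto simp: concave_on_def)
  define xt where "xt = (\<Sum>j=1..N. lam j *\<^sub>R X j)"
  define yt where "yt = (\<Sum>j=1..N. lam j *\<^sub>R Y j)"
  have xtD: "xt \<in> edom \<theta>" unfolding xt_def
    by (rule convex_sum[where C="edom \<theta>"]) (use cvD lam1 lam0 XD in auto)
  have ytE: "yt \<in> edom \<omega>" unfolding yt_def
    by (rule convex_sum[where C="edom \<omega>"]) (use cvE lam1 lam0 YE in auto)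
  have Nne: "{1..N} \<noteq> {}" using N by simp
  have J1: "thr xt + f xt y \<le> (\<Sum>j=1..N. lam j * (thr (X j) + f (X j) y))"
    unfolding xt_def
    using convex_on_sum[where S="{1..N}" and C="edom \<theta>" and f="\<lambda>a. thr a + f a y" and a=lam and y=X]
      cv1 lam1 lam0 XD Nne by auto
  have J2: "omr yt + - f x yt \<le> (\<Sum>j=1..N. lam j * (omr (Y j) + - f x (Y j)))"
    unfolding yt_def
    using convex_on_sum[where S="{1..N}" and C="edom \<omega>" and f="\<lambda>b. omr b + - f x b" and a=lam and y=Y]
      cv2 lam1 lam0 YE Nne by auto
  have sg: "(\<Sum>j=1..N. lam j * gap j) = (\<Sum>j=1..N. lam j * (thr (X j) + f (X j) y))
      + (\<Sum>j=1..N. lam j * (omr (Y j) + - f x (Y j))) - (\<Sum>j=1..N. lam j) * (omr y + thr x)"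
    by (simp add: gap_def distrib_left right_diff_distrib sum.distrib sum_subtractf sum_distrib_right)
  have sg2: "(\<Sum>j=1..N. lam j * gap j) = 1 / (2 * S) * (\<Sum>k=1..N. 2 * \<gamma> k * gap k)"
    unfolding sum_distrib_left using Spos by (intro sum.cong) (auto simp: lam_def)
  have real_ineq: "thr xt + f xt y - omr y - (thr x + f x yt - omr yt)
      \<le> 1 / (2 * S) * (Dn 1 - Dn (Suc N) + (\<Sum>k=1..N. R k))"
  proof -
    have "thr xt + f xt y - omr y - (thr x + f x yt - omr yt) \<le> (\<Sum>j=1..N. lam j * gap j)"
      using J1 J2 sg lam1 by simp
    also have "\<dots> \<le> 1 / (2 * S) * (Dn 1 - Dn (Suc N) + (\<Sum>k=1..N. R k))"
      unfolding sg2 using Spos telN by (intro mult_left_mono) auto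
    finally show ?thesis .
  qed
  have eA: "(\<Sum>j=1..N. (\<gamma> j / S) *\<^sub>R xs s j) = xt"
    by (simp add: xt_def lam_def S_def X_def)
  have eB: "(\<Sum>j=1..N. (\<gamma> j / S) *\<^sub>R ys s j) = yt"
    by (simp add: yt_def lam_def S_def Y_def)
  have eC: "norm ((x, y) - (xs s 1, ys s 1))^2 = Dn 1"
    by (simp add: Dn_def X_def Y_def norm_Pair norm_minus_commute)
  have eD: "norm ((xs s (N + 1), ys s (N + 1)) - (x, y))^2 = Dn (Suc N)"
    by (simp add: Dn_def X_def Y_def norm_Pair)
  have eE: "(\<Sum>k=1..N. \<gamma> k ^ 2 * norm ((vx k, vy k) + (Gx (xs s k) (ys s k) (\<xi> k s), - Gy (xs s k) (ys s k) (\<xi> k s)))^2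
       + 2 * \<gamma> k * inner ((Gx (xs s k) (ys s k) (\<xi> k s), - Gy (xs s k) (ys s k) (\<xi> k s)) - (gx (xs s k) (ys s k), - gy (xs s k) (ys s k))) ((x, y) - (xs s k, ys s k)))
     = (\<Sum>k=1..N. R k)"
  proof (intro sum.cong refl)
    fix k
    show "\<gamma> k ^ 2 * norm ((vx k, vy k) + (Gx (xs s k) (ys s k) (\<xi> k s), - Gy (xs s k) (ys s k) (\<xi> k s)))^2
       + 2 * \<gamma> k * inner ((Gx (xs s k) (ys s k) (\<xi> k s), - Gy (xs s k) (ys s k) (\<xi> k s)) - (gx (xs s k) (ys s k), - gy (xs s k) (ys s k))) ((x, y) - (xs s k, ys s k))
       = R k"
      by (simp add: R_def X_def Y_def GX_def GY_def gxk_def gyk_def norm_Pair)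
  qed
  have eF: "(\<Sum>k=1..N. \<gamma> k) = S" by (simp add: S_def)
  show ?thesis
    unfolding Let_def eF unfolding eA eB eC eD eE
    using real_ineq fin1[OF xtD] fin1[OF z(1)] fin2[OF ytE] fin2[OF z(2)] by simp
qed

end
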